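(* Let $A,B\in\mathbb{R}^{n\times n}$ be symmetric matrices and suppose $I_{\succeq}(A,B)\neq\emptyset$. If $I_{\succeq}(A,B)$ is a single-point set, then $B$ is indefinite and $I_{\succ}(A,B)=\emptyset$. Otherwise, $I_{\succeq}(A,B)$ is an interval and (a) $Q(A)\cap Q(B)=N(A)\cap N(B)$; (b) $N(A+\sigma B)=N(A)\cap N(B)$ for every $\sigma$ in the interior of $I_{\succeq}(A,B)$; (c) $A$ and $B$ are simultaneously diagonalizable via congruence.
   Context: For symmetric $A,B$: $I_{\succ}(A,B)=\{\sigma\in\mathbb{R}: A+\sigma B\succ 0\}$ (positive definite), $I_{\succeq}(A,B)=\{\sigma\in\mathbb{R}: A+\sigma B\succeq 0\}$ (positive semidefinite), $Q(A)=\{v\in\mathbb{R}^n: v^TAv=0\}$, $N(A)=\{v: Av=0\}$. $A$ and $B$ are simultaneously diagonalizable via congruence if there is a nonsingular matrix $C$ such that both $C^TAC$ and $C^TBC$ are diagonal. *)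

theory Defs
  imports "HOL-Analysis.Analysis"
begin

definition symmetric_mat :: "real^'n^'n \<Rightarrow> bool" where
  "symmetric_mat A \<longleftrightarrow> transpose A = A"

definition pos_def :: "real^'n^'n \<Rightarrow> bool" where
  "pos_def A \<longleftrightarrow> (\<forall>x. x \<noteq> 0 \<longrightarrow> x \<bullet> (A *v x) > 0)"

definition pos_semidef :: "real^'n^'n \<Rightarrow> bool" where
  "pos_semidef A \<longleftrightarrow> (\<forall>x. x \<bullet> (A *v x) \<ge> 0)"

definition indefinite :: "real^'n^'n \<Rightarrow> bool" where
  "indefinite A \<longleftrightarrow> \<not> pos_semidef A \<and> \<not> pos_semidef (- A)"

definition I_pd :: "real^'n^'n \<Rightarrow> real^'n^'n \<Rightarrow> real set" where
  "I_pd A B = {\<sigma>. pos_def (A + \<sigma> *\<^sub>R B)}"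

definition I_psd :: "real^'n^'n \<Rightarrow> real^'n^'n \<Rightarrow> real set" where
  "I_psd A B = {\<sigma>. pos_semidef (A + \<sigma> *\<^sub>R B)}"

definition Qset :: "real^'n^'n \<Rightarrow> (real^'n) set" where
  "Qset A = {v. v \<bullet> (A *v v) = 0}"

definition Nset :: "real^'n^'n \<Rightarrow> (real^'n) set" where
  "Nset A = {v. A *v v = 0}"

definition diagonal_mat :: "real^'n^'n \<Rightarrow> bool" where
  "diagonal_mat M \<longleftrightarrow> (\<forall>i j. i \<noteq> j \<longrightarrow> M $ i $ j = 0)"

definition simultaneously_diagonalizable_congruence :: "real^'n^'n \<Rightarrow> real^'n^'n \<Rightarrow> bool" where
  "simultaneously_diagonalizable_congruence A B \<longleftrightarrow>
     (\<exists>C::real^'n^'n. invertible C \<and> diagonal_mat (transpose C ** A ** C) \<and> diagonal_mat (transpose C ** B ** C))"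

end

theory Submission
  imports Defs
begin


lemma sym_inner:
  fixes M :: "real^'n^'n"
  assumes "symmetric_mat M"
  shows "x \<bullet> (M *v y) = y \<bullet> (M *v x)"
proof -
  have "x \<bullet> (M *v y) = (x v* M) \<bullet> y" by (simp add: dot_lmul_matrix)
  also have "x v* M = transpose M *v x" by (simp add: transpose_matrix_vector)
  also have "\<dots> = M *v x" using assms by (simp add: symmetric_mat_def)
  finally show ?thesis by (simp add: inner_commute)
qed

lemma symmetric_lin:
  fixes A B :: "real^'n^'n"
  assumes "symmetric_mat A" "symmetric_mat B"
  shows "symmetric_mat (a *\<^sub>R A + b *\<^sub>R B)"
  using assms unfolding symmetric_mat_def transpose_def
  by (simp add: vec_eq_iff)

lemma symmetric_lin2:
  fixes A B :: "real^'n^'n"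
  assumes "symmetric_mat A" "symmetric_mat B"
  shows "symmetric_mat (A + b *\<^sub>R B)"
  using symmetric_lin[OF assms, of 1 b] by simp

lemma quad_expand:
  fixes M :: "real^'n^'n"
  assumes "symmetric_mat M"
  shows "(x + t *\<^sub>R y) \<bullet> (M *v (x + t *\<^sub>R y)) =
     x \<bullet> (M *v x) + 2 * t * (y \<bullet> (M *v x)) + t^2 * (y \<bullet> (M *v y))"
  using sym_inner[OF assms, of x y]
  by (simp add: matrix_vector_right_distrib matrix_vector_mult_scaleR inner_add_left inner_add_right
      power2_eq_square algebra_simps)

lemma quad_homog:
  fixes M :: "real^'n^'n"
  shows "(c *\<^sub>R x) \<bullet> (M *v (c *\<^sub>R x)) = c^2 * (x \<bullet> (M *v x))"
  by (simp add: matrix_vector_mult_scaleR power2_eq_square)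

lemma quad_lin:
  fixes A B :: "real^'n^'n"
  shows "x \<bullet> ((A + s *\<^sub>R B) *v x) = x \<bullet> (A *v x) + s * (x \<bullet> (B *v x))"
  by (simp add: matrix_vector_mult_add_rdistrib scaleR_matrix_vector_assoc[symmetric] inner_add_right)

lemma bil_lin:
  fixes A B :: "real^'n^'n"
  shows "y \<bullet> ((A + s *\<^sub>R B) *v x) = y \<bullet> (A *v x) + s * (y \<bullet> (B *v x))"
  by (simp add: matrix_vector_mult_add_rdistrib scaleR_matrix_vector_assoc[symmetric] inner_add_right)

lemma quad_nonneg_zero:
  fixes a b :: real
  assumes "\<And>t. 0 \<le> 2 * t * a + t^2 * b"
  shows "a = 0"
proof (rule ccontr)
  assume "a \<noteq> 0"
  define t where "t = - a / (\<bar>b\<bar> + 1)"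
  have pos: "\<bar>b\<bar> + 1 > 0" by simp
  have "2 * t * a + t^2 * b \<le> 2 * t * a + t^2 * \<bar>b\<bar>"
    by (simp add: mult_left_mono)
  also have "\<dots> = a^2 * (\<bar>b\<bar> - 2 * (\<bar>b\<bar> + 1)) / (\<bar>b\<bar> + 1)^2"
  proof -
    have gen: "\<And>c d. c > 0 \<Longrightarrow> 2 * (- a / c) * a + (- a / c)^2 * d = a^2 * (d - 2 * c) / c^2"
      by (simp add: field_simps power2_eq_square)
    show ?thesis unfolding t_def by (rule gen[OF pos])
  qed
  also have "\<dots> < 0"
    using \<open>a \<noteq> 0\<close> pos by (intro divide_neg_pos mult_pos_neg) auto
  finally show False using assms[of t] by linarith
qed

lemma psd_null:
  fixes M :: "real^'n^'n"
  assumes "symmetric_mat M" "pos_semidef M" "v \<bullet> (M *v v) = 0"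
  shows "M *v v = 0"
proof -
  have "\<And>y. y \<bullet> (M *v v) = 0"
  proof -
    fix y
    show "y \<bullet> (M *v v) = 0"
    proof (rule quad_nonneg_zero)
      fix t
      show "0 \<le> 2 * t * (y \<bullet> (M *v v)) + t^2 * (y \<bullet> (M *v y))"
        using assms(2) quad_expand[OF assms(1), of v t y] assms(3)
        unfolding pos_semidef_def by (metis add_0)
    qed
  qed
  from this[of "M *v v"] show ?thesis by simp
qed


lemma quad_cont: "continuous_on S (\<lambda>x. x \<bullet> ((M::real^'n^'n) *v x))"
  by (intro continuous_intros matrix_vector_mult_linear_continuous_on)

lemma quad_normalize:
  fixes M :: "real^'n^'n"
  assumes "z \<noteq> 0"
  shows "z \<bullet> (M *v z) = (norm z)^2 * ((z /\<^sub>R norm z) \<bullet> (M *v (z /\<^sub>R norm z)))"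
proof -
  have "z = norm z *\<^sub>R (z /\<^sub>R norm z)" using assms by simp
  then have "z \<bullet> (M *v z) = (norm z *\<^sub>R (z /\<^sub>R norm z)) \<bullet> (M *v (norm z *\<^sub>R (z /\<^sub>R norm z)))"
    by simp
  also have "\<dots> = (norm z)^2 * ((z /\<^sub>R norm z) \<bullet> (M *v (z /\<^sub>R norm z)))"
    by (rule quad_homog)
  finally show ?thesis .
qed

lemma simdiag_sub:
  fixes C M :: "real^'n^'n"
  assumes symC: "symmetric_mat C" and symM: "symmetric_mat M"
  shows "subspace S \<Longrightarrow> (\<forall>x\<in>S. x \<noteq> 0 \<longrightarrow> x \<bullet> (M *v x) > 0) \<Longrightarrow>
    \<exists>B. B \<subseteq> S \<and> independent B \<and> S \<subseteq> span B \<and>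
      (\<forall>x\<in>B. \<forall>y\<in>B. x \<noteq> y \<longrightarrow> x \<bullet> (M *v y) = 0 \<and> x \<bullet> (C *v y) = 0)"
proof (induction "dim S" arbitrary: S rule: less_induct)
  case less
  note sub = less.prems(1) and pd = less.prems(2)
  show ?case
  proof (cases "S \<subseteq> {0}")
    case True
    have "span {} = {0::real^'n}" by simp
    then have "S \<subseteq> span {}" using True by simp
    then show ?thesis using independent_empty by blast
  next
    case False
    then obtain x0 where x0: "x0 \<in> S" "x0 \<noteq> 0" by auto
    define T where "T = S \<inter> sphere 0 1"
    define g where "g = (\<lambda>x. (x \<bullet> (C *v x)) / (x \<bullet> (M *v x)))"
    have cT: "compact T" unfolding T_def
      by (intro closed_Int_compact closed_subspace sub compact_sphere)
    have "x0 /\<^sub>R norm x0 \<in> T" unfolding T_def using x0 sub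
      by (simp add: subspace_scale)
    then have neT: "T \<noteq> {}" by auto
    have Mpos: "\<And>x. x \<in> T \<Longrightarrow> x \<bullet> (M *v x) > 0"
      using pd unfolding T_def by auto
    have "continuous_on T g" unfolding g_def
      by (intro continuous_on_divide quad_cont) (use Mpos in force)
    then obtain x where xT: "x \<in> T" and xmax: "\<And>y. y \<in> T \<Longrightarrow> g y \<le> g x"
      using continuous_attains_sup[OF cT neT] by blast
    define \<rho> where "\<rho> = g x"
    have xS: "x \<in> S" and xn: "norm x = 1" using xT unfolding T_def by auto
    have xMx: "x \<bullet> (M *v x) > 0" using Mpos[OF xT] .
    have xeq: "x \<bullet> (C *v x) = \<rho> * (x \<bullet> (M *v x))"
      using xMx unfolding \<rho>_def g_def by simp
    have bound: "z \<bullet> (C *v z) \<le> \<rho> * (z \<bullet> (M *v z))" if zS: "z \<in> S" for z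
    proof (cases "z = 0")
      case True then show ?thesis by simp
    next
      case False
      define u where "u = z /\<^sub>R norm z"
      have uT: "u \<in> T" unfolding T_def u_def using zS sub False by (simp add: subspace_scale)
      have "g u \<le> \<rho>" using xmax[OF uT] unfolding \<rho>_def .
      then have "u \<bullet> (C *v u) \<le> \<rho> * (u \<bullet> (M *v u))"
        using Mpos[OF uT] unfolding g_def by (simp add: divide_le_eq)
      then have le: "(norm z)^2 * (u \<bullet> (C *v u)) \<le> (norm z)^2 * (\<rho> * (u \<bullet> (M *v u)))"
        by (simp add: mult_left_mono)
      have "z \<bullet> (C *v z) = (norm z)^2 * (u \<bullet> (C *v u))"
        unfolding u_def by (rule quad_normalize[OF False])
      also have "\<dots> \<le> (norm z)^2 * (\<rho> * (u \<bullet> (M *v u)))" by (rule le)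
      also have "\<dots> = \<rho> * ((norm z)^2 * (u \<bullet> (M *v u)))"
        by (rule mult.left_commute)
      also have "(norm z)^2 * (u \<bullet> (M *v u)) = z \<bullet> (M *v z)"
        unfolding u_def by (rule quad_normalize[OF False, symmetric])
      finally show ?thesis .
    qed
    define D where "D = C + (- \<rho>) *\<^sub>R M"
    have symD: "symmetric_mat D" unfolding D_def by (rule symmetric_lin2[OF symC symM])
    have Dq: "\<And>z. z \<bullet> (D *v z) = z \<bullet> (C *v z) - \<rho> * (z \<bullet> (M *v z))"
      unfolding D_def quad_lin by simp
    have Dlin: "\<And>y z. y \<bullet> (D *v z) = y \<bullet> (C *v z) - \<rho> * (y \<bullet> (M *v z))"
      unfolding D_def bil_lin by simp
    have key: "y \<bullet> (C *v x) = \<rho> * (y \<bullet> (M *v x))" if yS: "y \<in> S" for y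
    proof -
      have "- (y \<bullet> (D *v x)) = 0"
      proof (rule quad_nonneg_zero)
        fix t :: real
        have xtS: "x + t *\<^sub>R y \<in> S" using xS yS sub by (simp add: subspace_add subspace_scale)
        then have "(x + t *\<^sub>R y) \<bullet> (D *v (x + t *\<^sub>R y)) \<le> 0"
          using bound[OF xtS] Dq[of "x + t *\<^sub>R y"] by linarith
        moreover have "x \<bullet> (D *v x) = 0" using Dq xeq by simp
        ultimately show "0 \<le> 2 * t * - (y \<bullet> (D *v x)) + t^2 * - (y \<bullet> (D *v y))"
          using quad_expand[OF symD, of x t y] by simp
      qed
      then show ?thesis using Dlin[of y x] by simp
    qed
    define S' where "S' = S \<inter> {y. (M *v x) \<bullet> y = 0}"
    have subS': "subspace S'" unfolding S'_def
      by (intro subspace_inter sub subspace_hyperplane)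
    have xS': "x \<notin> S'" unfolding S'_def using xMx by (simp add: inner_commute)
    have "S' \<subseteq> S" unfolding S'_def by auto
    then have "S' \<subset> S" using xS xS' by blast
    moreover have sp1: "span S' = S'" using subS' by (rule span_eq_iff[THEN iffD2])
    moreover have sp2: "span S = S" using sub by (rule span_eq_iff[THEN iffD2])
    ultimately have "span S' \<subset> span S" by (simp only:)
    then have dlt: "dim S' < dim S" by (rule dim_psubset)
    have pdS': "\<forall>y\<in>S'. y \<noteq> 0 \<longrightarrow> y \<bullet> (M *v y) > 0" using pd unfolding S'_def by auto
    obtain B' where B': "B' \<subseteq> S'" "independent B'" "S' \<subseteq> span B'"
      "\<forall>a\<in>B'. \<forall>b\<in>B'. a \<noteq> b \<longrightarrow> a \<bullet> (M *v b) = 0 \<and> a \<bullet> (C *v b) = 0"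
      using less.hyps[OF dlt subS' pdS'] by blast
    have spanB': "span B' = S'"
      by (rule antisym[OF span_minimal[OF B'(1) subS'] B'(3)])
    have xnot: "x \<notin> span B'" using spanB' xS' by simp
    have indep: "independent (insert x B')" by (rule independent_insertI[OF xnot B'(2)])
    have spans: "S \<subseteq> span (insert x B')"
    proof
      fix z assume zS: "z \<in> S"
      define c where "c = (z \<bullet> (M *v x)) / (x \<bullet> (M *v x))"
      have "z - c *\<^sub>R x \<in> S'" unfolding S'_def using zS xS sub xMx
        by (simp add: subspace_diff subspace_scale inner_diff_right inner_commute c_def)
      then have "z - c *\<^sub>R x \<in> span (insert x B')"
        using spanB' span_mono[of B' "insert x B'"] by auto
      moreover have "c *\<^sub>R x \<in> span (insert x B')" by (simp add: span_base span_scale)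
      ultimately have "(z - c *\<^sub>R x) + c *\<^sub>R x \<in> span (insert x B')" by (rule span_add)
      then show "z \<in> span (insert x B')" by simp
    qed
    have orthx: "b \<bullet> (M *v x) = 0 \<and> x \<bullet> (M *v b) = 0 \<and> b \<bullet> (C *v x) = 0 \<and> x \<bullet> (C *v b) = 0"
      if "b \<in> B'" for b
    proof -
      have bS': "b \<in> S'" using that B'(1) by auto
      then have bS: "b \<in> S" and bM: "b \<bullet> (M *v x) = 0" unfolding S'_def by (auto simp: inner_commute)
      have "b \<bullet> (C *v x) = 0" using key[OF bS] bM by simp
      then show ?thesis using bM sym_inner[OF symM, of x b] sym_inner[OF symC, of x b] by simp
    qed
    have pw: "\<forall>a\<in>insert x B'. \<forall>b\<in>insert x B'. a \<noteq> b \<longrightarrow> a \<bullet> (M *v b) = 0 \<and> a \<bullet> (C *v b) = 0"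
      using B'(4) orthx by blast
    have sub2: "insert x B' \<subseteq> S" using xS B'(1) \<open>S' \<subseteq> S\<close> by blast
    show ?thesis using sub2 indep spans pw by blast
  qed
qed



lemma indep_union:
  fixes S T :: "(real^'n) set"
  assumes iS: "independent S" and iT: "independent T" and disj: "span S \<inter> span T \<subseteq> {0}"
  shows "independent (S \<union> T)"
proof -
  have "finite T" using iT independent_bound by blast
  then show ?thesis using iT disj
  proof (induction T rule: finite_induct)
    case empty
    then show ?case using iS by simp
  next
    case (insert t T)
    have iT': "independent T" using insert.prems(1) by (simp add: independent_insert split: if_splits)
    have tT: "t \<notin> span T" using insert.prems(1) insert.hyps(2) by (simp add: independent_insert)
    have spT: "span T \<subseteq> span (insert t T)" by (rule span_mono) auto
    have IH: "independent (S \<union> T)" using insert.IH[OF iT'] insert.prems(2) spT by blast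
    have tnot: "t \<notin> span (S \<union> T)"
    proof
      assume "t \<in> span (S \<union> T)"
      then obtain s u where su: "s \<in> span S" "u \<in> span T" "t = s + u"
        unfolding span_Un by blast
      have "t \<in> span (insert t T)" by (simp add: span_base)
      moreover have "u \<in> span (insert t T)" using su(2) spT by blast
      ultimately have "t - u \<in> span (insert t T)" by (rule span_diff)
      then have "s \<in> span (insert t T)" using su(3) by simp
      then have "s = 0" using su(1) insert.prems(2) by blast
      then show False using su tT by simp
    qed
    have "independent (insert t (S \<union> T))" by (rule independent_insertI[OF tnot IH])
    then show ?case by simp
  qed
qed

lemma entry_formula:
  fixes A C :: "real^'n^'n"
  shows "(transpose C ** A ** C) $ i $ j = column i C \<bullet> (A *v column j C)"
  by (simp add: matrix_matrix_mult_def matrix_vector_mult_def inner_vec_def column_def transpose_def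
      sum_distrib_left sum_distrib_right mult.assoc mult.left_commute) (rule sum.swap)

lemma mv_lin:
  fixes A B :: "real^'n^'n"
  shows "(A + s *\<^sub>R B) *v v = A *v v + s *\<^sub>R (B *v v)"
  by (simp add: matrix_vector_mult_add_rdistrib scaleR_matrix_vector_assoc[symmetric])

lemma pd_perturb:
  fixes A B :: "real^'n^'n"
  assumes "pos_def (A + s *\<^sub>R B)"
  shows "\<exists>e>0. pos_semidef (A + (s + e) *\<^sub>R B)"
proof -
  define Sph where "Sph = sphere (0::real^'n) 1"
  obtain b :: "real^'n" where b: "b \<in> Basis" using nonempty_Basis by blast
  have neS: "Sph \<noteq> {}" unfolding Sph_def using b by (auto intro!: exI[of _ b])
  have cS: "compact Sph" unfolding Sph_def by simp
  obtain u0 where u0: "u0 \<in> Sph" and u0min: "\<And>y. y \<in> Sph \<Longrightarrow>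
      u0 \<bullet> ((A + s *\<^sub>R B) *v u0) \<le> y \<bullet> ((A + s *\<^sub>R B) *v y)"
    using continuous_attains_inf[OF cS neS quad_cont] by blast
  define m where "m = u0 \<bullet> ((A + s *\<^sub>R B) *v u0)"
  have "u0 \<noteq> 0" using u0 unfolding Sph_def by auto
  then have mpos: "m > 0" using assms unfolding pos_def_def m_def by blast
  have "continuous_on Sph (\<lambda>x. \<bar>x \<bullet> (B *v x)\<bar>)"
    by (intro continuous_intros quad_cont)
  then obtain u1 where u1max: "\<And>y. y \<in> Sph \<Longrightarrow> \<bar>y \<bullet> (B *v y)\<bar> \<le> \<bar>u1 \<bullet> (B *v u1)\<bar>"
    using continuous_attains_sup[OF cS neS] by blast
  define K where "K = \<bar>u1 \<bullet> (B *v u1)\<bar>"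
  have K0: "K \<ge> 0" unfolding K_def by simp
  define e where "e = m / (K + 1)"
  have epos: "e > 0" unfolding e_def using mpos K0 by simp
  have "pos_semidef (A + (s + e) *\<^sub>R B)"
    unfolding pos_semidef_def
  proof
    fix x :: "real^'n"
    show "0 \<le> x \<bullet> ((A + (s + e) *\<^sub>R B) *v x)"
    proof (cases "x = 0")
      case True then show ?thesis by simp
    next
      case False
      define u where "u = x /\<^sub>R norm x"
      have uS: "u \<in> Sph" unfolding Sph_def u_def using False by simp
      have h1: "m \<le> u \<bullet> (A *v u) + s * (u \<bullet> (B *v u))"
        using u0min[OF uS] unfolding m_def quad_lin .
      have h2: "\<bar>u \<bullet> (B *v u)\<bar> \<le> K" using u1max[OF uS] unfolding K_def .
      have "e * K < m" unfolding e_def using mpos K0 by (simp add: field_simps)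
      moreover have "- (e * K) \<le> e * (u \<bullet> (B *v u))"
      proof -
        have "- K \<le> u \<bullet> (B *v u)" using h2 by (simp add: abs_le_iff)
        then have "e * (- K) \<le> e * (u \<bullet> (B *v u))" by (rule mult_left_mono) (use epos in simp)
        then show ?thesis by simp
      qed
      ultimately have "0 \<le> u \<bullet> ((A + (s + e) *\<^sub>R B) *v u)"
        unfolding quad_lin distrib_right using h1 by linarith
      then have "0 \<le> (norm x)^2 * (u \<bullet> ((A + (s + e) *\<^sub>R B) *v u))" by simp
      then show ?thesis unfolding u_def using quad_normalize[OF False] by simp
    qed
  qed
  then show ?thesis using epos by blast
qed



lemma psd_iff: "\<sigma> \<in> I_psd A B \<longleftrightarrow> (\<forall>x. 0 \<le> x \<bullet> (A *v x) + \<sigma> * (x \<bullet> (B *v x)))"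
  unfolding I_psd_def pos_semidef_def quad_lin by simp

lemma null_two:
  fixes A B :: "real^'n^'n"
  assumes sA: "symmetric_mat A" and sB: "symmetric_mat B"
    and a: "a \<in> I_psd A B" and b: "b \<in> I_psd A B" and ab: "a < b"
    and qa: "v \<bullet> ((A + a *\<^sub>R B) *v v) = 0" and qb: "v \<bullet> ((A + b *\<^sub>R B) *v v) = 0"
  shows "A *v v = 0 \<and> B *v v = 0"
proof -
  have "(A + a *\<^sub>R B) *v v = 0"
    using psd_null[OF symmetric_lin2[OF sA sB] _ qa] a unfolding I_psd_def by simp
  moreover have "(A + b *\<^sub>R B) *v v = 0"
    using psd_null[OF symmetric_lin2[OF sA sB] _ qb] b unfolding I_psd_def by simp
  ultimately have e1: "A *v v + a *\<^sub>R (B *v v) = 0" and e2: "A *v v + b *\<^sub>R (B *v v) = 0"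
    unfolding mv_lin by auto
  then have "(b - a) *\<^sub>R (B *v v) = 0"
    by (metis (no_types, lifting) add_diff_cancel_left diff_zero scaleR_left_diff_distrib)
  then have Bv: "B *v v = 0" using ab by simp
  then show ?thesis using e1 by simp
qed

lemma subspace_ker: "subspace {x. (M::real^'n^'n) *v x = 0}"
  unfolding subspace_def by (simp add: matrix_vector_right_distrib matrix_vector_mult_scaleR)

lemma subspace_orth: "subspace {x::real^'n. \<forall>k\<in>K. k \<bullet> x = 0}"
  unfolding subspace_def by (simp add: inner_add_right)

lemma simdiag_main:
  fixes A B :: "real^'n^'n"
  assumes sA: "symmetric_mat A" and sB: "symmetric_mat B"
    and a: "a \<in> I_psd A B" and b: "b \<in> I_psd A B" and ab: "a < b"
  shows "simultaneously_diagonalizable_congruence A B"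
proof -
  define M where "M = (A + a *\<^sub>R B) + (A + b *\<^sub>R B)"
  have sM: "symmetric_mat M" unfolding M_def symmetric_mat_def using sA sB
    unfolding symmetric_mat_def transpose_def by (simp add: vec_eq_iff)
  have Mq: "\<And>x y. x \<bullet> (M *v y) = x \<bullet> ((A + a *\<^sub>R B) *v y) + x \<bullet> ((A + b *\<^sub>R B) *v y)"
    unfolding M_def by (simp only: matrix_vector_mult_add_rdistrib inner_add_right)
  have MA: "\<And>x y. x \<bullet> (M *v y) = 2 * (x \<bullet> (A *v y)) + (a + b) * (x \<bullet> (B *v y))"
    unfolding Mq bil_lin distrib_right by linarith
  have qa0: "\<And>x. 0 \<le> x \<bullet> ((A + a *\<^sub>R B) *v x)" using a unfolding I_psd_def pos_semidef_def by blast
  have qb0: "\<And>x. 0 \<le> x \<bullet> ((A + b *\<^sub>R B) *v x)" using b unfolding I_psd_def pos_semidef_def by blast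
  have psdM: "pos_semidef M" unfolding pos_semidef_def Mq using qa0 qb0 by (simp add: add_nonneg_nonneg)
  define K where "K = {x. M *v x = 0}"
  define W where "W = {x::real^'n. \<forall>k\<in>K. k \<bullet> x = 0}"
  have Knull: "A *v k = 0 \<and> B *v k = 0" if "k \<in> K" for k
  proof -
    have "k \<bullet> (M *v k) = 0" using that unfolding K_def by simp
    then have "k \<bullet> ((A + a *\<^sub>R B) *v k) = 0" "k \<bullet> ((A + b *\<^sub>R B) *v k) = 0"
      using qa0[of k] qb0[of k] unfolding Mq by linarith+
    then show ?thesis using null_two[OF sA sB a b ab] by blast
  qed
  have subK: "subspace K" unfolding K_def by (rule subspace_ker)
  have subW: "subspace W" unfolding W_def by (rule subspace_orth)
  have pdW: "\<forall>x\<in>W. x \<noteq> 0 \<longrightarrow> x \<bullet> (M *v x) > 0"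
  proof (intro ballI impI)
    fix x assume xW: "x \<in> W" and x0: "x \<noteq> 0"
    show "x \<bullet> (M *v x) > 0"
    proof (rule ccontr)
      assume "\<not> x \<bullet> (M *v x) > 0"
      then have "x \<bullet> (M *v x) = 0" using psdM unfolding pos_semidef_def by (meson not_le order_antisym)
      then have "x \<in> K" unfolding K_def using psd_null[OF sM psdM] by simp
      then have "x \<bullet> x = 0" using xW unfolding W_def by blast
      then show False using x0 by simp
    qed
  qed
  obtain BW where BW: "BW \<subseteq> W" "independent BW" "W \<subseteq> span BW"
    "\<forall>x\<in>BW. \<forall>y\<in>BW. x \<noteq> y \<longrightarrow> x \<bullet> (M *v y) = 0 \<and> x \<bullet> (B *v y) = 0"
    using simdiag_sub[OF sB sM subW pdW] apply (elim exE conjE) apply (rule that) apply assumption+ done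
  obtain BK where BK: "BK \<subseteq> K" "independent BK" "K \<subseteq> span BK"
    by (rule basis_exists[of K]) (rule that)
  define U where "U = BK \<union> BW"
  have spK: "span BK \<subseteq> K" by (rule span_minimal[OF BK(1) subK])
  have spW: "span BW \<subseteq> W" by (rule span_minimal[OF BW(1) subW])
  have KW: "K \<inter> W \<subseteq> {0}" unfolding W_def by auto
  have indU: "independent U" unfolding U_def
    by (rule indep_union[OF BK(2) BW(2)]) (use spK spW KW in blast)
  have spanU: "span U = UNIV"
  proof -
    have "x \<in> span U" for x
    proof -
      obtain y z where yz: "y \<in> span K" "\<And>w. w \<in> span K \<Longrightarrow> orthogonal z w" "x = y + z"
        using orthogonal_subspace_decomp_exists[of K x] by blast
      have spKK: "span K = K" using subK by (rule span_eq_iff[THEN iffD2])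
      have yK: "y \<in> K" using yz(1) unfolding spKK .
      have "\<forall>k\<in>K. k \<bullet> z = 0"
      proof
        fix k assume "k \<in> K"
        then have "orthogonal z k" using yz(2) span_base by blast
        then show "k \<bullet> z = 0" unfolding orthogonal_def by (simp add: inner_commute)
      qed
      then have zW: "z \<in> W" unfolding W_def by simp
      have "y \<in> span U" using yK BK(3) span_mono[of BK U] unfolding U_def by blast
      moreover have "z \<in> span U" using zW BW(3) span_mono[of BW U] unfolding U_def by blast
      ultimately show ?thesis using yz(3) span_add by blast
    qed
    then show ?thesis by auto
  qed
  have pwU: "x \<bullet> (A *v y) = 0 \<and> x \<bullet> (B *v y) = 0" if "x \<in> U" "y \<in> U" "x \<noteq> y" for x y
  proof (cases "x \<in> BK \<or> y \<in> BK")
    case True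
    then show ?thesis
    proof
      assume "x \<in> BK"
      then have "A *v x = 0" "B *v x = 0" using Knull BK(1) by blast+
      then show ?thesis using sym_inner[OF sA, of x y] sym_inner[OF sB, of x y] by simp
    next
      assume "y \<in> BK"
      then have "A *v y = 0" "B *v y = 0" using Knull BK(1) by blast+
      then show ?thesis by simp
    qed
  next
    case False
    then have "x \<in> BW" "y \<in> BW" using that unfolding U_def by auto
    then have "x \<bullet> (M *v y) = 0" "x \<bullet> (B *v y) = 0" using BW(4) that(3) by blast+
    then show ?thesis using MA[of x y] by simp
  qed
  have finU: "finite U" using indU independent_bound by blast
  have "card U = dim (span U)" using dim_span_eq_card_independent[OF indU] by simp
  then have cardU: "card U = CARD('n)" using spanU by simp
  obtain f where f: "bij_betw f (UNIV::'n set) U"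
    using finite_same_card_bij[of "UNIV::'n set" U] finU cardU by auto
  define C :: "real^'n^'n" where "C = (\<chi> i j. f j $ i)"
  have colC: "column j C = f j" for j unfolding C_def column_def by (simp add: vec_eq_iff)
  have fU: "f j \<in> U" for j using f by (auto simp: bij_betw_def)
  have finj: "f i = f j \<Longrightarrow> i = j" for i j using f by (auto simp: bij_betw_def inj_on_def)
  have diagA: "diagonal_mat (transpose C ** A ** C)"
    unfolding diagonal_mat_def entry_formula colC using pwU fU finj by blast
  have diagB: "diagonal_mat (transpose C ** B ** C)"
    unfolding diagonal_mat_def entry_formula colC using pwU fU finj by blast
  have "invertible C"
    unfolding invertible_left_inverse matrix_left_invertible_independent_columns colC
  proof (intro allI impI)
    fix c :: "'n \<Rightarrow> real" and i
    assume h: "(\<Sum>i\<in>UNIV. c i *s f i) = 0"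
    define g where "g = inv_into UNIV f"
    have gf: "g (f i) = i" for i unfolding g_def using f by (simp add: bij_betw_def)
    have "(\<Sum>v\<in>U. c (g v) *\<^sub>R v) = (\<Sum>i\<in>UNIV. c (g (f i)) *\<^sub>R f i)"
      using sum.reindex_bij_betw[OF f, of "\<lambda>v. c (g v) *\<^sub>R v"] by simp
    also have "\<dots> = 0" using h by (simp add: gf scalar_mult_eq_scaleR)
    finally have "(\<Sum>v\<in>U. c (g v) *\<^sub>R v) = 0" .
    moreover have ie: "\<forall>c. (\<Sum>v\<in>U. c v *\<^sub>R v) = 0 \<longrightarrow> (\<forall>v\<in>U. c v = 0)"
      using indU unfolding independent_explicit by blast
    ultimately have "\<forall>v\<in>U. c (g v) = 0" using ie[rule_format, of "\<lambda>v. c (g v)"] by simp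
    then show "c i = 0" using fU[of i] gf[of i] by metis
  qed
  then show ?thesis unfolding simultaneously_diagonalizable_congruence_def
    using diagA diagB by blast
qed



theorem theorem3:
  fixes A B :: "real^'n^'n"
  assumes "symmetric_mat A" and "symmetric_mat B"
    and "I_psd A B \<noteq> {}"
  shows "((\<exists>s. I_psd A B = {s}) \<longrightarrow> indefinite B \<and> I_pd A B = {})
    \<and> (\<not> (\<exists>s. I_psd A B = {s}) \<longrightarrow>
           is_interval (I_psd A B)
         \<and> Qset A \<inter> Qset B = Nset A \<inter> Nset B
         \<and> (\<forall>\<sigma>\<in>interior (I_psd A B). Nset (A + \<sigma> *\<^sub>R B) = Nset A \<inter> Nset B)
         \<and> simultaneously_diagonalizable_congruence A B)"
proof (intro conjI impI)
  note sA = assms(1) and sB = assms(2)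
  {
    assume "\<exists>s. I_psd A B = {s}"
    then obtain s where Is: "I_psd A B = {s}" by blast
    have sI: "\<forall>x. 0 \<le> x \<bullet> (A *v x) + s * (x \<bullet> (B *v x))" using Is psd_iff[of s A B] by simp
    show "indefinite B" unfolding indefinite_def
    proof
      show "\<not> pos_semidef B"
      proof
        assume pB: "pos_semidef B"
        have "\<forall>x. 0 \<le> x \<bullet> (A *v x) + (s + 1) * (x \<bullet> (B *v x))"
        proof
          fix x
          have "0 \<le> x \<bullet> (B *v x)" using pB unfolding pos_semidef_def by blast
          then show "0 \<le> x \<bullet> (A *v x) + (s + 1) * (x \<bullet> (B *v x))"
            unfolding distrib_right using sI[rule_format, of x] by linarith
        qed
        then have "s + 1 \<in> I_psd A B" using psd_iff by blast
        then show False using Is by simp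
      qed
      show "\<not> pos_semidef (- B)"
      proof
        assume "pos_semidef (- B)"
        moreover have negmv: "\<And>x. (- B) *v x = - (B *v x)"
          by (simp add: vec_eq_iff matrix_vector_mult_def sum_negf)
        ultimately have nb: "\<forall>x. x \<bullet> (B *v x) \<le> 0" unfolding pos_semidef_def
          by simp
        have "\<forall>x. 0 \<le> x \<bullet> (A *v x) + (s - 1) * (x \<bullet> (B *v x))"
        proof
          fix x
          show "0 \<le> x \<bullet> (A *v x) + (s - 1) * (x \<bullet> (B *v x))"
            unfolding left_diff_distrib using sI[rule_format, of x] nb[rule_format, of x] by linarith
        qed
        then have "s - 1 \<in> I_psd A B" using psd_iff by blast
        then show False using Is by simp
      qed
    qed
    show "I_pd A B = {}"
    proof (rule ccontr)
      assume "I_pd A B \<noteq> {}"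
      then obtain t where pdt: "pos_def (A + t *\<^sub>R B)" unfolding I_pd_def by blast
      have "t \<in> I_psd A B" unfolding I_psd_def pos_semidef_def mem_Collect_eq
      proof
        fix x :: "real^'n"
        show "0 \<le> x \<bullet> ((A + t *\<^sub>R B) *v x)"
        proof (cases "x = 0")
          case True then show ?thesis by simp
        next
          case False then show ?thesis using pdt unfolding pos_def_def by (simp add: less_imp_le)
        qed
      qed
      then have "t = s" using Is by simp
      then obtain e where "e > 0" "pos_semidef (A + (s + e) *\<^sub>R B)"
        using pd_perturb pdt by blast
      then have "s + e \<in> I_psd A B" unfolding I_psd_def by simp
      then show False using Is \<open>e > 0\<close> by simp
    qed
  }
  assume ns: "\<not> (\<exists>s. I_psd A B = {s})"
  obtain a b where a: "a \<in> I_psd A B" and b: "b \<in> I_psd A B" and ab: "a < b"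
  proof -
    obtain x where x: "x \<in> I_psd A B" using assms(3) by blast
    then obtain y where y: "y \<in> I_psd A B" "y \<noteq> x" using ns by blast
    show ?thesis
    proof (cases "x < y")
      case True then show ?thesis using that x y by blast
    next
      case False then show ?thesis using that[of y x] x y by simp
    qed
  qed
  show "is_interval (I_psd A B)"
    unfolding is_interval_convex_1 convex_alt
  proof (intro ballI allI impI)
    fix x y and u :: real
    assume x: "x \<in> I_psd A B" and y: "y \<in> I_psd A B" and u: "0 \<le> u \<and> u \<le> 1"
    show "(1 - u) *\<^sub>R x + u *\<^sub>R y \<in> I_psd A B"
      unfolding psd_iff
    proof
      fix v
      have hx: "0 \<le> v \<bullet> (A *v v) + x * (v \<bullet> (B *v v))" using x psd_iff by blast
      have hy: "0 \<le> v \<bullet> (A *v v) + y * (v \<bullet> (B *v v))" using y psd_iff by blast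
      have "0 \<le> (1 - u) * (v \<bullet> (A *v v) + x * (v \<bullet> (B *v v))) + u * (v \<bullet> (A *v v) + y * (v \<bullet> (B *v v)))"
        using hx hy u by (simp add: add_nonneg_nonneg)
      also have "\<dots> = v \<bullet> (A *v v) + ((1 - u) *\<^sub>R x + u *\<^sub>R y) * (v \<bullet> (B *v v))"
        by (simp add: algebra_simps)
      finally show "0 \<le> v \<bullet> (A *v v) + ((1 - u) *\<^sub>R x + u *\<^sub>R y) * (v \<bullet> (B *v v))" .
    qed
  qed
  have QN: "Qset A \<inter> Qset B = Nset A \<inter> Nset B"
  proof
    show "Qset A \<inter> Qset B \<subseteq> Nset A \<inter> Nset B"
    proof
      fix v assume "v \<in> Qset A \<inter> Qset B"
      then have "v \<bullet> (A *v v) = 0" "v \<bullet> (B *v v) = 0" unfolding Qset_def by auto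
      then have "v \<bullet> ((A + a *\<^sub>R B) *v v) = 0" "v \<bullet> ((A + b *\<^sub>R B) *v v) = 0"
        unfolding quad_lin by simp_all
      then show "v \<in> Nset A \<inter> Nset B" using null_two[OF sA sB a b ab] unfolding Nset_def by blast
    qed
    show "Nset A \<inter> Nset B \<subseteq> Qset A \<inter> Qset B" unfolding Nset_def Qset_def by auto
  qed
  show "Qset A \<inter> Qset B = Nset A \<inter> Nset B" by (rule QN)
  show "\<forall>\<sigma>\<in>interior (I_psd A B). Nset (A + \<sigma> *\<^sub>R B) = Nset A \<inter> Nset B"
  proof
    fix \<sigma> assume "\<sigma> \<in> interior (I_psd A B)"
    then obtain e where e: "e > 0" "ball \<sigma> e \<subseteq> I_psd A B" using mem_interior by blast
    define d where "d = e / 2"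
    have d: "d > 0" using e unfolding d_def by simp
    have "\<sigma> + d \<in> ball \<sigma> e" "\<sigma> - d \<in> ball \<sigma> e" using e unfolding d_def by (auto simp: dist_real_def)
    then have p: "\<sigma> + d \<in> I_psd A B" and m: "\<sigma> - d \<in> I_psd A B" using e by auto
    show "Nset (A + \<sigma> *\<^sub>R B) = Nset A \<inter> Nset B"
    proof
      show "Nset (A + \<sigma> *\<^sub>R B) \<subseteq> Nset A \<inter> Nset B"
      proof
        fix v assume "v \<in> Nset (A + \<sigma> *\<^sub>R B)"
        then have "(A + \<sigma> *\<^sub>R B) *v v = 0" unfolding Nset_def by simp
        then have q0: "v \<bullet> (A *v v) + \<sigma> * (v \<bullet> (B *v v)) = 0"
          using quad_lin[of v A \<sigma> B] by simp
        have "0 \<le> v \<bullet> (A *v v) + (\<sigma> + d) * (v \<bullet> (B *v v))" using p psd_iff by blast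
        moreover have "0 \<le> v \<bullet> (A *v v) + (\<sigma> - d) * (v \<bullet> (B *v v))" using m psd_iff by blast
        ultimately have "0 \<le> d * (v \<bullet> (B *v v))" "0 \<le> - (d * (v \<bullet> (B *v v)))"
          using q0 by (simp_all add: distrib_right left_diff_distrib)
        then have "d * (v \<bullet> (B *v v)) = 0" by linarith
        then have qB: "v \<bullet> (B *v v) = 0" using d by simp
        then have "v \<bullet> (A *v v) = 0" using q0 by simp
        then have "v \<in> Qset A \<inter> Qset B" using qB unfolding Qset_def by simp
        then show "v \<in> Nset A \<inter> Nset B" using QN by simp
      qed
      show "Nset A \<inter> Nset B \<subseteq> Nset (A + \<sigma> *\<^sub>R B)"
        unfolding Nset_def by (auto simp: mv_lin)
    qed
  qed
  show "simultaneously_diagonalizable_congruence A B"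
    by (rule simdiag_main[OF sA sB a b ab])
qed


end
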